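(* Let $q=5^m$ with $m$ even, let $\alpha\in\mathbb{F}_q$ be a non-square, and let $Z\in\mathbb{F}_{q^2}\setminus\mathbb{F}_q$ satisfy $Z^2=\alpha$. Let $f(x)=x^{q+2}$ on $\mathbb{F}_{q^2}$ and for $b\in\mathbb{F}_{q^2}$ put $\beta(b)=\beta_f(1,\tfrac14 b)$. Then for every $d\in\mathbb{F}_q^*$: $\beta(2dZ)=3$ if $d^2\alpha+2\in C_0$, and $\beta(2dZ)\in\{0,3\}$ if $d^2\alpha+2\in C_1$.
   Context: $\beta_f(a,b)$ is the number of $(x,y)\in\mathbb{F}_{q^2}^2$ with $f(x)-f(y)=b$ and $f(x+a)-f(y+a)=b$. $C_0$ (resp. $C_1$) denotes the set of nonzero squares (resp. non-squares) in $\mathbb{F}_q^*$. *)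

theory Defs
  imports Main
begin

text \<open>The ambient field \<open>F_{q^2}\<close> is a finite field type 'a with CARD('a) = q^2.
  The subfield \<open>F_q\<close> is the set of fixed points of the Frobenius x \<mapsto> x^q.\<close>

definition subfield_q :: "nat \<Rightarrow> 'a::field set" where
  "subfield_q q = {x. x ^ q = x}"

definition C0 :: "nat \<Rightarrow> 'a::field set" where
  "C0 q = {y ^ 2 | y. y \<in> subfield_q q \<and> y \<noteq> 0}"

definition C1 :: "nat \<Rightarrow> 'a::field set" where
  "C1 q = (subfield_q q - {0}) - C0 q"

definition beta_f :: "('a::{field,finite} \<Rightarrow> 'a) \<Rightarrow> 'a \<Rightarrow> 'a \<Rightarrow> nat" where
  "beta_f f a b = card {(x, y). f x - f y = b \<and> f (x + a) - f (y + a) = b}"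

end

theory Submission
  imports Defs "HOL-Number_Theory.Number_Theory" "HOL-Computational_Algebra.Polynomial"
begin



lemma fermat_ff1:
  fixes x :: "'a :: {field,finite}"
  assumes "x \<noteq> 0"
  shows "x ^ (card (UNIV :: 'a set) - 1) = 1"
proof -
  define U where "U = (UNIV :: 'a set) - {0}"
  have cU: "card U = card (UNIV :: 'a set) - 1" unfolding U_def by (simp add: card_Diff_singleton)
  have "(\<Prod>y\<in>U. x * y) = x ^ card U * \<Prod>U" by (simp add: prod.distrib)
  moreover have "(\<Prod>y\<in>U. x * y) = (\<Prod>y\<in>U. y)"
    unfolding U_def
    by (rule prod.reindex_bij_witness[of _ "\<lambda>y. y / x" "\<lambda>y. x * y"]) (use assms in auto)
  moreover have "\<Prod>U \<noteq> (0::'a)" unfolding U_def by (subst prod_zero_iff) auto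
  ultimately have "x ^ card U = 1" by simp
  thus ?thesis using cU by simp
qed

lemma fermat_ff:
  fixes x :: "'a :: {field,finite}"
  shows "x ^ card (UNIV :: 'a set) = x"
proof (cases "x = 0")
  case True
  have "card (UNIV :: 'a set) > 0" by (simp add: finite_UNIV_card_ge_0)
  thus ?thesis using True by simp
next
  case False
  have "card (UNIV :: 'a set) > 0" by (simp add: finite_UNIV_card_ge_0)
  hence "x ^ card (UNIV :: 'a set) = x * x ^ (card (UNIV :: 'a set) - 1)"
    by (cases "card (UNIV :: 'a set)") auto
  thus ?thesis using fermat_ff1[OF False] by simp
qed

lemma card_pow_eq_le:
  fixes c :: "'a :: field"
  assumes "n > 0"
  shows "card {x. x ^ n = c} \<le> n"
proof -
  define p where "p = monom (1::'a) n + [:-c:]"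
  have dp: "degree p = n"
    unfolding p_def using assms by (subst degree_add_eq_left) (auto simp: degree_monom_eq)
  hence "p \<noteq> 0" using assms by auto
  have "{x. x ^ n = c} = {x. poly p x = 0}"
    by (auto simp: p_def poly_monom)
  then show ?thesis using card_poly_roots_bound[OF \<open>p \<noteq> 0\<close>] dp by simp
qed

lemma card_fibers_le:
  assumes "finite B" "f ` A \<subseteq> B" "\<And>y. y \<in> B \<Longrightarrow> card {x\<in>A. f x = y} \<le> k"
    "\<And>y. finite {x\<in>A. f x = y}"
  shows "card A \<le> k * card B"
proof -
  have "A = (\<Union>y\<in>B. {x\<in>A. f x = y})" using assms(2) by auto
  hence "card A \<le> (\<Sum>y\<in>B. card {x\<in>A. f x = y})"
    by (metis assms(1) card_UN_le)
  also have "\<dots> \<le> (\<Sum>y\<in>B. k)" by (rule sum_mono) (use assms(3) in auto)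
  finally show ?thesis by (simp add: mult.commute)
qed

lemma root_exists:
  fixes w :: "'a :: {field,finite}"
  assumes n: "n > 0" "n dvd card (UNIV :: 'a set) - 1"
    and w: "w \<noteq> 0" "w ^ ((card (UNIV :: 'a set) - 1) div n) = 1"
  shows "\<exists>s. s ^ n = w"
proof -
  define Q where "Q = card (UNIV :: 'a set)"
  have Q2: "Q \<ge> 2"
  proof -
    have "card {0::'a, 1} \<le> card (UNIV :: 'a set)" by (rule card_mono) auto
    thus ?thesis by (simp add: Q_def)
  qed
  define j where "j = (Q - 1) div n"
  have jn: "Q - 1 = j * n" using n unfolding j_def Q_def by auto
  have jpos: "j > 0" using jn Q2 by (cases j) auto
  define U where "U = (UNIV :: 'a set) - {0}"
  define K where "K = {y::'a. y ^ j = 1}"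
  define I where "I = (\<lambda>s. s ^ n) ` U"
  have IK: "I \<subseteq> K"
  proof
    fix y assume "y \<in> I"
    then obtain s where s: "s \<noteq> 0" "y = s ^ n" unfolding I_def U_def by auto
    have "y ^ j = s ^ (Q - 1)" using s jn by (simp add: power_mult[symmetric] mult.commute)
    also have "\<dots> = 1" using fermat_ff1[OF s(1)] Q_def by simp
    finally show "y \<in> K" unfolding K_def by simp
  qed
  have cK: "card K \<le> j" unfolding K_def by (rule card_pow_eq_le[OF jpos])
  have cU: "card U = Q - 1" unfolding U_def Q_def by (simp add: card_Diff_singleton)
  have "card U \<le> n * card I"
  proof (rule card_fibers_le[where f = "\<lambda>s. s ^ n"])
    show "finite I" by simp
    show "(\<lambda>s. s ^ n) ` U \<subseteq> I" unfolding I_def by simp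
    fix y
    show "finite {x \<in> U. x ^ n = y}" by simp
    have "card {x \<in> U. x ^ n = y} \<le> card {x. x ^ n = y}" by (rule card_mono) auto
    also have "\<dots> \<le> n" by (rule card_pow_eq_le[OF n(1)])
    finally show "card {x \<in> U. x ^ n = y} \<le> n" .
  qed
  hence "j \<le> card I" using cU jn n(1) by (simp add: mult.commute)
  hence "card K \<le> card I" using cK by simp
  hence "I = K" using IK card_mono[OF _ IK] by (intro card_subset_eq) auto
  moreover have "w \<in> K" using w jn unfolding K_def j_def Q_def by simp
  ultimately show ?thesis unfolding I_def by auto
qed



locale L =
  fixes q :: nat and \<alpha> Z :: "'a::{field,finite}"
  assumes c5: "(5::'a) = 0"
  and cardQ: "card (UNIV::'a set) = q^2"
  and frob_add: "\<And>x y::'a. (x+y)^q = x^q + y^q"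
  and q24: "24 dvd q - 1"
  and q25: "q \<ge> 25"
  and aC1: "\<alpha> \<in> C1 q"
  and Z2: "Z^2 = \<alpha>"
begin

lemma q_odd: "odd q"
proof -
  have "2 dvd q - 1" using q24 by (rule dvd_trans[rotated]) simp
  then obtain k where "q - 1 = 2 * k" by (elim dvdE)
  hence "q = 2 * k + 1" using q25 by simp
  thus ?thesis by simp
qed

lemma frob_mult: "(x*y::'a)^q = x^q * y^q" by (simp add: power_mult_distrib)
lemma frob_minus: "(-x::'a)^q = -(x^q)" using q_odd by (simp add: power_minus_odd)
lemma frob_diff: "(x-y::'a)^q = x^q - y^q"
  using frob_add[of x "-y"] frob_minus[of y] by simp
lemma frob_of_nat: "(of_nat n::'a)^q = of_nat n"
proof (induction n)
  case 0 then show ?case using q25 by simp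
next
  case (Suc n) then show ?case using frob_add[of 1 "of_nat n"] by simp
qed
lemma frob_numeral: "(numeral k::'a)^q = numeral k"
  using frob_of_nat[of "numeral k"] by simp
lemma frob_one: "(1::'a)^q = 1" by simp
lemma frob_zero: "(0::'a)^q = 0" using q25 by simp
lemma frob_div: "(x/y::'a)^q = x^q / y^q" by (simp add: power_divide)
lemma frob_pow: "(x^n::'a)^q = (x^q)^n" by (simp add: power_mult[symmetric] mult.commute)

lemma frob_pw: "(x^(numeral k)::'a)^q = (x^q)^(numeral k)" by (simp add: power_mult[symmetric] mult.commute)

lemmas frob = frob_pw frob_add frob_mult frob_minus frob_diff frob_numeral frob_one frob_zero frob_div

lemma conj_conj: "((x::'a)^q)^q = x"
  using fermat_ff[of x] cardQ by (simp add: power_mult[symmetric] power2_eq_square)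

lemma c5_eq: "(x::'a) = y + 5 * w \<Longrightarrow> x = y" using c5 by simp

lemma two_ne: "(2::'a) \<noteq> 0"
proof
  assume h: "(2::'a) = 0"
  have "(5::'a) = 2*2+1" by simp
  thus False using h c5 by simp
qed
lemma three_ne: "(3::'a) \<noteq> 0"
proof
  assume h: "(3::'a) = 0"
  have "(2::'a)*3 = 5+1" by simp
  thus False using h c5 by simp
qed
lemma four_ne: "(4::'a) \<noteq> 0"
proof
  assume h: "(4::'a) = 0"
  have "(5::'a) = 4+1" by simp
  thus False using h c5 by simp
qed

lemma aF: "\<alpha>^q = \<alpha>" and a_ne: "\<alpha> \<noteq> 0"
  using aC1 by (auto simp: C1_def subfield_q_def)
lemma a_nsq: "y^q = y \<Longrightarrow> \<alpha> \<noteq> y^2"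
  using aC1 a_ne by (auto simp: C1_def C0_def subfield_q_def)

lemma Z_ne: "Z \<noteq> 0" using Z2 a_ne by auto

lemma Zq: "Z^q = -Z"
proof -
  have "Z^q \<noteq> Z" using a_nsq[of Z] Z2 by auto
  moreover have "(Z^q)^2 = (Z^2)^q" by (simp only: power_mult[symmetric] mult.commute)
  hence "(Z^q)^2 = Z^2" using Z2 aF by simp
  hence "(Z^q - Z) * (Z^q + Z) = 0" by (simp add: algebra_simps power2_eq_square)
  ultimately show ?thesis by (simp add: eq_neg_iff_add_eq_0)
qed

lemma split0:
  assumes "P^q = P" "Q^q = Q" "P + Q*Z = 0"
  shows "P = 0 \<and> Q = 0"
proof -
  have h1: "(P + Q*Z)^q = P - Q*Z" using assms(1,2) Zq by (simp add: frob)
  have h2: "(P + Q*Z)^q = 0" using assms(3) q25 by simp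
  from h1 h2 have "P - Q*Z = 0" by simp
  moreover have "2 * (Q * Z) = (P + Q*Z) - (P - Q*Z)" by (simp add: algebra_simps)
  ultimately have "2 * (Q * Z) = 0" using assms(3) by simp
  hence "Q = 0" using two_ne Z_ne by simp
  thus ?thesis using assms(3) by simp
qed

lemma split_eq:
  assumes "P^q = P" "Q^q = Q" "P'^q = P'" "Q'^q = Q'" "P + Q*Z = P' + Q'*Z"
  shows "P = P' \<and> Q = Q'"
proof -
  have "(P-P') + (Q-Q')*Z = 0" using assms(5) by (simp add: algebra_simps)
  moreover have "(P-P')^q = P-P'" "(Q-Q')^q = Q-Q'" using assms(1-4) by (simp_all add: frob_diff)
  ultimately show ?thesis using split0[of "P - P'" "Q - Q'"] by simp
qed

lemma decomp: "\<exists>a b. a^q = a \<and> b^q = b \<and> x = a + b*Z"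
proof (intro exI conjI)
  show "((x + x^q)/2)^q = (x + x^q)/2" using conj_conj by (simp add: frob add.commute)
  show "((x - x^q)/(2*Z))^q = (x - x^q)/(2*Z)" using conj_conj Zq
    by (simp add: frob divide_simps)
  show "x = (x + x^q)/2 + (x - x^q)/(2*Z) * Z" using two_ne four_ne Z_ne by (simp add: field_simps)
qed

lemma fform:
  assumes "a^q = a" "b^q = b"
  shows "(a+b*Z)^(q+2) = (a^2-\<alpha>*b^2)*a + ((a^2-\<alpha>*b^2)*b)*Z"
proof -
  have h: "(a+b*Z)^q = a - b*Z" using assms Zq by (simp add: frob)
  have "(a+b*Z)^(q+2) = (a - b*Z) * (a+b*Z)^2" by (simp only: power_add h)
  also have "\<dots> = (a^2-Z^2*b^2)*a + ((a^2-Z^2*b^2)*b)*Z" by (simp add: algebra_simps power2_eq_square)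
  finally show ?thesis using Z2 by simp
qed

end


context L begin

lemma qt: "\<exists>t. q = 24 * t + 1"
proof -
  obtain t where "q - 1 = 24 * t" using q24 by (elim dvdE)
  thus ?thesis using q25 by (intro exI[of _ t]) simp
qed

lemma Fq_pow1: "(a::'a)^q = a \<Longrightarrow> a \<noteq> 0 \<Longrightarrow> a^(q-1) = 1"
proof -
  assume h: "a^q = a" "a \<noteq> 0"
  have "a * a^(q-1) = a^q" using q25 by (cases q) auto
  hence "a * a^(q-1) = a * 1" using h by simp
  thus ?thesis using h(2) mult_left_cancel by blast
qed

lemma cardm1: "card (UNIV::'a set) - 1 = (q - 1) * (q + 1)"
  using cardQ by (simp add: power2_eq_square algebra_simps)

lemma sixteen: "(16::'a) = 1"
proof -
  have "(16::'a) = 1 + 3 * 5" by simp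
  thus ?thesis using c5 by simp
qed

lemma sqrt2: "\<exists>r::'a. r^q = r \<and> r^2 = 2"
proof -
  obtain t where t: "q = 24 * t + 1" using qt by blast
  have cm: "card (UNIV::'a set) - 1 = 2 * (4 * (3 * t * (24 * t + 2)))"
    using cardm1 t by (simp add: algebra_simps)
  have e: "(card (UNIV::'a set) - 1) div 2 = 4 * (3 * t * (24 * t + 2))" using cm by simp
  have "(2::'a)^((card (UNIV::'a set) - 1) div 2) = ((2::'a)^4)^(3 * t * (24 * t + 2))"
    by (subst e) (rule power_mult)
  also have "\<dots> = 1" using sixteen by simp
  finally have h2: "(2::'a)^((card (UNIV::'a set) - 1) div 2) = 1" .
  have "2 dvd card (UNIV::'a set) - 1" using cm by simp
  then obtain r where r: "r^2 = (2::'a)"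
    using root_exists[OF _ _ two_ne h2] by auto
  have e1: "r^(q-1) = ((r^2)^4)^(3 * t)" using t by (simp add: power_mult[symmetric])
  have h16: "(2::'a)^4 = 1" using sixteen by simp
  have e2: "((r^2)^4)^(3 * t) = 1" by (simp only: r h16 power_one)
  have "r * r^(q-1) = r^q" using q25 by (cases q) auto
  hence "r^q = r" using e1 e2 by simp
  thus ?thesis using r by blast
qed

lemma sqrt_nsq:
  fixes a :: 'a
  assumes "a^q = a" "a \<noteq> 0" "\<forall>y. y^q = y \<longrightarrow> a \<noteq> y^2"
  shows "\<exists>r. r^2 = a \<and> r^q = -r"
proof -
  obtain t where t: "q = 24 * t + 1" using qt by blast
  have cm: "card (UNIV::'a set) - 1 = 2 * ((q - 1) * (12 * t + 1))"
    using cardm1 t by (simp add: algebra_simps)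
  have e: "(card (UNIV::'a set) - 1) div 2 = (q - 1) * (12 * t + 1)" using cm by simp
  have "a^((card (UNIV::'a set) - 1) div 2) = (a^(q-1))^(12 * t + 1)"
    by (subst e) (rule power_mult)
  also have "\<dots> = 1" using Fq_pow1 assms by simp
  finally have h2: "a^((card (UNIV::'a set) - 1) div 2) = 1" .
  have "2 dvd card (UNIV::'a set) - 1" using cm by simp
  then obtain r where r: "r^2 = a"
    using root_exists[OF _ _ assms(2) h2] by auto
  have "(r^q)^2 = (r^2)^q" by (simp only: power_mult[symmetric] mult.commute)
  hence "(r^q)^2 = r^2" using r assms(1) by simp
  hence "(r^q - r) * (r^q + r) = 0" by (simp add: algebra_simps power2_eq_square)
  moreover have "r^q \<noteq> r" using assms(3) r by auto
  ultimately have "r^q = -r" by (simp add: eq_neg_iff_add_eq_0)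
  thus ?thesis using r by blast
qed

lemma nsq_prod:
  fixes a b :: 'a
  assumes "a^q = a" "a \<noteq> 0" "\<forall>y. y^q = y \<longrightarrow> a \<noteq> y^2"
      and "b^q = b" "b \<noteq> 0" "\<forall>y. y^q = y \<longrightarrow> b \<noteq> y^2"
  shows "\<exists>w. w^q = w \<and> a * b = w^2"
proof -
  obtain r :: 'a where r: "r^2 = a" "r^q = -r" using sqrt_nsq assms(1-3) by blast
  obtain s :: 'a where s: "s^2 = b" "s^q = -s" using sqrt_nsq assms(4-6) by blast
  show ?thesis using r s by (intro exI[of _ "r*s"]) (simp add: frob_mult power_mult_distrib)
qed

lemma cube_root:
  fixes w k :: 'a
  assumes "w \<noteq> 0" "w^(q+1) = k^3" "k^q = k" "k \<noteq> 0"
  shows "\<exists>s. s^3 = w"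
proof -
  obtain t where t: "q = 24 * t + 1" using qt by blast
  have cm: "card (UNIV::'a set) - 1 = 3 * ((q + 1) * (8 * t))"
    using cardm1 t by (simp add: algebra_simps)
  have e: "(card (UNIV::'a set) - 1) div 3 = (q + 1) * (8 * t)" using cm by simp
  have "w^((card (UNIV::'a set) - 1) div 3) = (w^(q+1))^(8 * t)"
    by (subst e) (rule power_mult)
  also have "\<dots> = (k^(q-1))" using assms(2) t by (simp add: power_mult[symmetric])
  also have "\<dots> = 1" using Fq_pow1 assms by simp
  finally have h2: "w^((card (UNIV::'a set) - 1) div 3) = 1" .
  have "3 dvd card (UNIV::'a set) - 1" using cm by simp
  then show ?thesis
    using root_exists[OF _ _ assms(1) h2] by auto
qed

end


context L begin

lemma odd_f: "(-x::'a)^(q+2) = -(x^(q+2))"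
  using q_odd by (simp add: power_minus_odd)

lemma sq3_zero:
  fixes A e :: 'a
  assumes "A^q = A" "e^q = e" "\<alpha> * e^2 = 3 * A^2"
  shows "e = 0 \<and> A = 0"
proof -
  obtain r :: 'a where r: "r^q = r" "r^2 = 2" using sqrt2 by blast
  have "e = 0"
  proof (rule ccontr)
    assume ne: "e \<noteq> 0"
    have "(2*r*A/e)^2 = 4 * r^2 * A^2 / e^2" by (simp add: power_divide power_mult_distrib)
    also have "\<dots> = 8 * A^2 / e^2" using r by simp
    also have "8 * A^2 = 3 * A^2 + 5 * A^2" by simp
    hence "8 * A^2 = 3 * A^2" using c5 by simp
    hence "8 * A^2 / e^2 = \<alpha>" using assms(3) ne by (simp add: field_simps)
    finally have "\<alpha> = (2*r*A/e)^2" by simp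
    moreover have "(2*r*A/e)^q = 2*r*A/e" using r assms by (simp add: frob)
    ultimately show False using a_nsq by blast
  qed
  thus ?thesis using assms(3) three_ne by simp
qed

lemma pairs_back:
  fixes x y :: 'a
  assumes "y = -x-1"
  shows "x^(q+2) - y^(q+2) = x^(q+2) + (x+1)^(q+2)"
    and "(x+1)^(q+2) - (y+1)^(q+2) = x^(q+2) + (x+1)^(q+2)"
proof -
  have y1: "y = -(x+1)" using assms by simp
  have "y^(q+2) = -((x+1)^(q+2))" unfolding y1 by (rule odd_f)
  thus "x^(q+2) - y^(q+2) = x^(q+2) + (x+1)^(q+2)" by simp
  have y2: "y + 1 = -x" using assms by simp
  have "(y+1)^(q+2) = -(x^(q+2))" unfolding y2 by (rule odd_f)
  thus "(x+1)^(q+2) - (y+1)^(q+2) = x^(q+2) + (x+1)^(q+2)" by simp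
qed

lemma pairs_fwd:
  assumes d: "d^q = d" "d \<noteq> 0"
    and h1: "x^(q+2) - y^(q+2) = 3*d*Z"
    and h2: "(x+1)^(q+2) - (y+1)^(q+2) = 3*d*Z"
  shows "y = -x-1"
proof -
  obtain a b where ab: "a^q = a" "b^q = b" "x = a + b*Z" using decomp by blast
  obtain c e where ce: "c^q = c" "e^q = e" "y = c + e*Z" using decomp by blast
  have a1: "(a+1)^q = a+1" "(c+1)^q = c+1" using ab ce by (simp_all add: frob)
  have x1: "x + 1 = (a+1) + b*Z" "y + 1 = (c+1) + e*Z" using ab ce by simp_all
  note fx = fform[OF ab(1,2)] fform[OF ce(1,2)] fform[OF a1(1) ab(2)] fform[OF a1(2) ce(2)]
  define Na where "Na = a^2-\<alpha>*b^2"
  define Nc where "Nc = c^2-\<alpha>*e^2"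
  define Na1 where "Na1 = (a+1)^2-\<alpha>*b^2"
  define Nc1 where "Nc1 = (c+1)^2-\<alpha>*e^2"
  have h1': "(Na*a + (Na*b)*Z) - (Nc*c + (Nc*e)*Z) = 3*d*Z"
    using h1 by (simp only: ab(3) ce(3) fx(1) fx(2) Na_def Nc_def)
  have h2': "(Na1*(a+1) + (Na1*b)*Z) - (Nc1*(c+1) + (Nc1*e)*Z) = 3*d*Z"
    using h2 by (simp only: x1 fx(3) fx(4) Na1_def Nc1_def)
  have e1: "(Na*a - Nc*c) + (Na*b - Nc*e)*Z = 0 + (3*d)*Z"
    using h1' by (simp add: algebra_simps)
  have e2: "(Na1*(a+1) - Nc1*(c+1)) + (Na1*b - Nc1*e)*Z = 0 + (3*d)*Z"
    using h2' by (simp add: algebra_simps)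
  have cl: "Na^q = Na" "Nc^q = Nc" "Na1^q = Na1" "Nc1^q = Nc1"
    unfolding Na_def Nc_def Na1_def Nc1_def using ab ce aF by (simp_all add: frob)
  have R1: "Na*a - Nc*c = 0" and I1: "Na*b - Nc*e = 3*d"
    using split_eq[OF _ _ _ _ e1] cl ab ce d by (simp_all add: frob)
  have R2: "Na1*(a+1) - Nc1*(c+1) = 0" and I2: "Na1*b - Nc1*e = 3*d"
    using split_eq[OF _ _ _ _ e2] cl ab ce d a1 by (simp_all add: frob)
  define A where "A = 2*a+1"
  define C where "C = 2*c+1"
  have AC: "A^q = A" "C^q = C" unfolding A_def C_def using ab ce by (simp_all add: frob)
  have E1: "A*b = C*e"
  proof -
    have "A*b - C*e = (Na1*b - Nc1*e) - (Na*b - Nc*e)"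
      unfolding A_def C_def Na_def Nc_def Na1_def Nc1_def by (simp add: algebra_simps power2_eq_square)
    thus ?thesis using I1 I2 by simp
  qed
  have E2: "2*A^2 - \<alpha>*b^2 = 2*C^2 - \<alpha>*e^2"
  proof -
    have "(2*A^2 - \<alpha>*b^2) - (2*C^2 - \<alpha>*e^2) = (Na1*(a+1) - Nc1*(c+1)) - (Na*a - Nc*c) + 5 * (a + a^2 - c - c^2)"
      unfolding A_def C_def Na_def Nc_def Na1_def Nc1_def by (simp add: algebra_simps power2_eq_square)
    thus ?thesis using R1 R2 c5 by simp
  qed
  have key: "(2*A^2 - 2*C^2) * (2*A^2 + \<alpha>*e^2) = 2*A^2 * ((2*A^2 - \<alpha>*b^2) - (2*C^2 - \<alpha>*e^2)) + 2*\<alpha>*((A*b)^2 - (C*e)^2)"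
    by (simp add: algebra_simps power2_eq_square)
  hence key2: "(2*A^2 - 2*C^2) * (2*A^2 + \<alpha>*e^2) = 0" using E1 E2 by simp
  have neq: "\<not> (a = c \<and> b = e)"
  proof
    assume "a = c \<and> b = e"
    hence "Na*b - Nc*e = 0" unfolding Na_def Nc_def by simp
    thus False using I1 d(2) three_ne by simp
  qed
  show ?thesis
  proof (cases "2*A^2 + \<alpha>*e^2 = 0")
    case True
    have "\<alpha>*e^2 = 3*A^2"
    proof -
      have "\<alpha>*e^2 = 3*A^2 - 5*A^2" using True by (simp add: algebra_simps eq_neg_iff_add_eq_0)
      thus ?thesis using c5 by simp
    qed
    hence z1: "e = 0 \<and> A = 0" using sq3_zero AC ce by blast
    hence "-(\<alpha>*b^2) = 2*C^2" using E2 by simp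
    hence "\<alpha>*b^2 = -(2*C^2)" by (metis minus_minus)
    hence "\<alpha>*b^2 = 3*C^2 - 5*C^2" by simp
    hence "\<alpha>*b^2 = 3*C^2" using c5 by simp
    hence z2: "b = 0 \<and> C = 0" using sq3_zero AC ab by blast
    have "2*(a - c) = A - C" unfolding A_def C_def by (simp add: algebra_simps)
    hence "a = c" using z1 z2 two_ne by simp
    thus ?thesis using neq z1 z2 by simp
  next
    case False
    hence "2*A^2 - 2*C^2 = 0" using key2 by simp
    hence AA: "A^2 = C^2" using two_ne by (simp add: algebra_simps)
    hence "\<alpha>*b^2 = \<alpha>*e^2" using E2 by simp
    hence bb: "b^2 = e^2" using a_ne by simp
    have "(C - A)*(C + A) = 0" using AA by (simp add: algebra_simps power2_eq_square)
    hence cA: "C = A \<or> C = -A" by (simp add: eq_neg_iff_add_eq_0)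
    have "(e - b)*(e + b) = 0" using bb by (simp add: algebra_simps power2_eq_square)
    hence eb: "e = b \<or> e = -b" by (simp add: eq_neg_iff_add_eq_0)
    have sgn: "(C = A \<and> e = b) \<or> (C = -A \<and> e = -b)"
    proof -
      { assume m: "C = A" "e = -b"
        hence "2*(A*b) = 0" using E1 by simp
        hence "A = 0 \<or> b = 0" using two_ne by simp
        hence ?thesis using m by auto }
      moreover
      { assume m: "C = -A" "e = b"
        hence "2*(A*b) = 0" using E1 by simp
        hence "A = 0 \<or> b = 0" using two_ne by simp
        hence ?thesis using m by auto }
      ultimately show ?thesis using cA eb by blast
    qed
    show ?thesis
    proof (cases "C = A \<and> e = b")
      case True
      have "2*(a - c) = A - C" unfolding A_def C_def by (simp add: algebra_simps)
      hence "a = c" using True two_ne by simp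
      thus ?thesis using True neq by simp
    next
      case False
      hence m: "C = -A" "e = -b" using sgn by auto
      have "2*(c + a + 1) = C + A" unfolding A_def C_def by (simp add: algebra_simps)
      hence "2*(c + a + 1) = 0" using m by simp
      hence s0: "c + (a + 1) = 0" using two_ne by (metis mult_eq_0_iff add.assoc)
      hence "c = -(a+1)" by (simp only: eq_neg_iff_add_eq_0)
      hence cc: "c = -a-1" by (simp only: minus_add_distrib diff_conv_add_uminus)
      have "y = (-a-1) + (-b)*Z" using ce(3) m cc by simp
      also have "\<dots> = -(a+b*Z) - 1" by (simp add: algebra_simps)
      finally show ?thesis using ab(3) by simp
    qed
  qed
qed

end


context L begin

lemma fsum:
  assumes "A^q = A" "b^q = b"
  shows "((A+2)+b*Z)^(q+2) + ((A+2)+b*Z+1)^(q+2)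
         = A*(2*A^2-1-2*\<alpha>*b^2) + (b*(2*A^2+3-2*\<alpha>*b^2))*Z"
proof -
  have h2: "(A+2)^q = A+2" "(A+3)^q = A+3" using assms by (simp_all add: frob)
  have x1: "(A+2)+b*Z+1 = (A+3)+b*Z" by simp
  have "((A+2)+b*Z)^(q+2) + ((A+2)+b*Z+1)^(q+2)
      = (((A+2)^2-\<alpha>*b^2)*(A+2) + ((A+3)^2-\<alpha>*b^2)*(A+3))
        + ((((A+2)^2-\<alpha>*b^2) + ((A+3)^2-\<alpha>*b^2))*b)*Z"
    unfolding x1 fform[OF h2(1) assms(2)] fform[OF h2(2) assms(2)] by (simp add: algebra_simps)
  also have "((A+2)^2-\<alpha>*b^2)*(A+2) + ((A+3)^2-\<alpha>*b^2)*(A+3)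
      = A*(2*A^2-1-2*\<alpha>*b^2) + 5*(7 + 8*A + 3*A^2 - \<alpha>*b^2)"
    by (simp add: algebra_simps power2_eq_square)
  also have "(((A+2)^2-\<alpha>*b^2) + ((A+3)^2-\<alpha>*b^2))*b
      = b*(2*A^2+3-2*\<alpha>*b^2) + 5*(2*A*b + 2*b)"
    by (simp add: algebra_simps power2_eq_square)
  finally show ?thesis using c5 by simp
qed

definition SA :: "'a \<Rightarrow> 'a set" where
  "SA d = {A. A^q = A \<and> A \<noteq> 0 \<and> A^2 = 4*(\<alpha>*d^2+2)}"
definition RR :: "'a \<Rightarrow> 'a set" where
  "RR d = {b. b^q = b \<and> \<alpha>*b^3 + b = d}"

lemma T_char:
  assumes d: "d^q = d"
  shows "x^(q+2) + (x+1)^(q+2) = 3*d*Z \<longleftrightarrow>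
         (\<exists>A\<in>SA d. x = (A+2) + (2*d)*Z) \<or> (\<exists>b\<in>RR d. x = 2 + b*Z)"
proof
  assume h: "x^(q+2) + (x+1)^(q+2) = 3*d*Z"
  obtain a b where ab: "a^q = a" "b^q = b" "x = a + b*Z" using decomp by blast
  define A where "A = a - 2"
  have Aq: "A^q = A" unfolding A_def using ab by (simp add: frob)
  have xa: "x = (A+2) + b*Z" unfolding A_def using ab by simp
  have "A*(2*A^2-1-2*\<alpha>*b^2) + (b*(2*A^2+3-2*\<alpha>*b^2))*Z = 0 + (3*d)*Z"
    using h fsum[OF Aq ab(2)] unfolding xa by simp
  hence P: "A*(2*A^2-1-2*\<alpha>*b^2) = 0" and Q: "b*(2*A^2+3-2*\<alpha>*b^2) = 3*d"
    using split_eq[of "A*(2*A^2-1-2*\<alpha>*b^2)" "b*(2*A^2+3-2*\<alpha>*b^2)" 0 "3*d"] Aq ab d aF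
    by (simp_all add: frob)
  show "(\<exists>A\<in>SA d. x = (A+2) + (2*d)*Z) \<or> (\<exists>b\<in>RR d. x = 2 + b*Z)"
  proof (cases "A = 0")
    case False
    hence h1: "2*A^2-1-2*\<alpha>*b^2 = 0" using P by simp
    have hb: "b*(2*A^2+3-2*\<alpha>*b^2) = b*(4 + (2*A^2-1-2*\<alpha>*b^2))" by (simp add: algebra_simps)
    have "3*d = b*(4 + (2*A^2-1-2*\<alpha>*b^2))" using Q hb by simp
    hence h4: "4*b = 3*d" unfolding h1 by simp
    have "2*d + 5*(2*d-3*b) - b = 4*(3*d - 4*b)" by (simp add: algebra_simps)
    hence "2*d + 5*(2*d-3*b) - b = 0" using h4 by simp
    hence b2: "b = 2*d" using c5 by simp
    have h1': "2*A^2-1-2*\<alpha>*(2*d)^2 = 0" using h1 by (simp only: b2)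
    have id: "A^2 - 4*(\<alpha>*d^2+2) = 3*(2*A^2-1-2*\<alpha>*(2*d)^2) + 5*(4*\<alpha>*d^2 - 1 - A^2)"
      by (simp add: algebra_simps power2_eq_square)
    have "A^2 - 4*(\<alpha>*d^2+2) = 0" unfolding id h1' c5 by simp
    hence "A \<in> SA d" unfolding SA_def using Aq False by simp
    thus ?thesis using xa b2 by blast
  next
    case True
    have "\<alpha>*b^3 + b - d = 2*(b*(2*A^2+3-2*\<alpha>*b^2) - 3*d) + 5*(\<alpha>*b^3 - b + d)"
      using True by (simp add: algebra_simps power2_eq_square power3_eq_cube)
    hence "\<alpha>*b^3 + b - d = 0" using Q c5 by simp
    hence "b \<in> RR d" unfolding RR_def using ab by simp
    thus ?thesis using xa True by auto
  qed
next
  assume "(\<exists>A\<in>SA d. x = (A+2) + (2*d)*Z) \<or> (\<exists>b\<in>RR d. x = 2 + b*Z)"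
  then obtain A b where Ab: "A^q = A" "b^q = b" "x = (A+2) + b*Z"
      "A*(2*A^2-1-2*\<alpha>*b^2) = 0" "b*(2*A^2+3-2*\<alpha>*b^2) = 3*d"
  proof (elim disjE bexE)
    fix A assume A: "A \<in> SA d" "x = (A+2) + (2*d)*Z"
    hence A2: "A^2 = 4*(\<alpha>*d^2+2)" and Aq: "A^q = A" unfolding SA_def by auto
    have "2*A^2-1-2*\<alpha>*(2*d)^2 = 3 * 5" using A2 by (simp add: algebra_simps power2_eq_square)
    hence e1: "2*A^2-1-2*\<alpha>*(2*d)^2 = 0" using c5 by simp
    have "(2*d)*(2*A^2+3-2*\<alpha>*(2*d)^2) = 3*d + 7*5*d" using A2 by (simp add: algebra_simps power2_eq_square)
    hence e2: "(2*d)*(2*A^2+3-2*\<alpha>*(2*d)^2) = 3*d" using c5 by simp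
    show thesis
      by (rule that[of A "2*d"]) (use Aq d A(2) e1 e2 in \<open>simp_all add: frob\<close>)
  next
    fix b assume b: "b \<in> RR d" "x = 2 + b*Z"
    hence b3: "\<alpha>*b^3 + b = d" and bq: "b^q = b" unfolding RR_def by auto
    have "b*(2*0^2+3-2*\<alpha>*b^2) = 3*d + 5*(b - d) - 2*(\<alpha>*b^3 + b - d)"
      by (simp add: algebra_simps power2_eq_square power3_eq_cube)
    hence e2: "b*(2*0^2+3-2*\<alpha>*b^2) = 3*d" using c5 b3 by simp
    show thesis
      by (rule that[of 0 b]) (use bq b(2) e2 q25 in simp_all)
  qed
  show "x^(q+2) + (x+1)^(q+2) = 3*d*Z"
    using fsum[OF Ab(1,2)] Ab(3-5) by simp
qed

end


context L begin

lemma card_T: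
  assumes d: "d^q = d" "d \<noteq> 0"
  shows "card {x. x^(q+2) + (x+1)^(q+2) = 3*d*Z} = card (SA d) + card (RR d)"
proof -
  let ?g1 = "\<lambda>A. (A+2) + (2*d)*Z" and ?g2 = "\<lambda>b. 2 + b*Z"
  have eq: "{x. x^(q+2) + (x+1)^(q+2) = 3*d*Z} = ?g1 ` SA d \<union> ?g2 ` RR d"
    using T_char[OF d(1)] by auto
  have disj: "?g1 ` SA d \<inter> ?g2 ` RR d = {}"
  proof (rule ccontr)
    assume "?g1 ` SA d \<inter> ?g2 ` RR d \<noteq> {}"
    then obtain A b where A: "A \<in> SA d" "b \<in> RR d" "(A+2) + (2*d)*Z = 2 + b*Z" by auto
    hence Aq: "A^q = A" "A \<noteq> 0" and bq: "b^q = b" unfolding SA_def RR_def by auto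
    have "A + 2 = 2" using split_eq[OF _ _ _ _ A(3)] Aq bq d by (simp add: frob)
    thus False using Aq by simp
  qed
  have i1: "inj_on ?g1 (SA d)" by (rule inj_onI) simp
  have i2: "inj_on ?g2 (RR d)" by (rule inj_onI) (use Z_ne in simp)
  show ?thesis unfolding eq
    by (subst card_Un_disjoint) (use disj i1 i2 in \<open>auto simp: card_image\<close>)
qed

lemma card_pairs:
  assumes d: "d^q = d" "d \<noteq> 0"
  shows "card {(x,y). x^(q+2) - y^(q+2) = 3*d*Z \<and> (x+1)^(q+2) - (y+1)^(q+2) = 3*d*Z}
       = card {x. x^(q+2) + (x+1)^(q+2) = 3*d*Z}"
proof -
  have "{(x,y). x^(q+2) - y^(q+2) = 3*d*Z \<and> (x+1)^(q+2) - (y+1)^(q+2) = 3*d*Z}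
      = (\<lambda>x. (x, -x-1)) ` {x. x^(q+2) + (x+1)^(q+2) = 3*d*Z}"
  proof (intro Set.set_eqI iffI)
    fix p assume "p \<in> {(x,y). x^(q+2) - y^(q+2) = 3*d*Z \<and> (x+1)^(q+2) - (y+1)^(q+2) = 3*d*Z}"
    then obtain x y where p: "p = (x,y)" "x^(q+2) - y^(q+2) = 3*d*Z"
        "(x+1)^(q+2) - (y+1)^(q+2) = 3*d*Z" by auto
    have y: "y = -x-1" using pairs_fwd[OF d p(2,3)] .
    have "x^(q+2) + (x+1)^(q+2) = 3*d*Z" using trans[OF pairs_back(1)[OF y, symmetric] p(2)] .
    thus "p \<in> (\<lambda>x. (x, -x-1)) ` {x. x^(q+2) + (x+1)^(q+2) = 3*d*Z}" using p(1) y by auto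
  next
    fix p assume "p \<in> (\<lambda>x. (x, -x-1)) ` {x. x^(q+2) + (x+1)^(q+2) = 3*d*Z}"
    then obtain x where p: "p = (x, -x-1)" "x^(q+2) + (x+1)^(q+2) = 3*d*Z" by auto
    show "p \<in> {(x,y). x^(q+2) - y^(q+2) = 3*d*Z \<and> (x+1)^(q+2) - (y+1)^(q+2) = 3*d*Z}"
    proof -
      have b1: "x^(q+2) - (-x-1)^(q+2) = 3*d*Z" using trans[OF pairs_back(1)[OF refl] p(2)] .
      have b2: "(x+1)^(q+2) - (-x-1+1)^(q+2) = 3*d*Z" using trans[OF pairs_back(2)[OF refl] p(2)] .
      show ?thesis unfolding p(1) mem_Collect_eq case_prod_conv using b1 b2 by (rule conjI)
    qed
  qed
  moreover have "inj_on (\<lambda>x::'a. (x, -x-1)) S" for S by (rule inj_onI) simp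
  ultimately show ?thesis by (simp add: card_image)
qed

lemma C0_iff: "x \<in> C0 q \<longleftrightarrow> (\<exists>y. x = y^2 \<and> y^q = y \<and> y \<noteq> 0)"
  by (auto simp: C0_def subfield_q_def)

lemma C1_iff: "x \<in> C1 q \<longleftrightarrow> x^q = x \<and> x \<noteq> 0 \<and> \<not> (\<exists>y. x = y^2 \<and> y^q = y \<and> y \<noteq> 0)"
  by (auto simp: C1_def C0_iff subfield_q_def)

lemma SA_C0:
  assumes "e^q = e" "e \<noteq> 0" "e^2 = \<alpha>*d^2+2"
  shows "card (SA d) = 2"
proof -
  have "SA d = {2*e, -(2*e)}"
  proof (intro Set.set_eqI iffI)
    fix A assume "A \<in> SA d"
    hence "A^2 = (2*e)^2" unfolding SA_def using assms(3) by (simp add: power_mult_distrib)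
    hence "(A - 2*e)*(A + 2*e) = 0" by (simp add: algebra_simps power2_eq_square)
    thus "A \<in> {2*e, -(2*e)}" by (auto simp: eq_neg_iff_add_eq_0)
  next
    fix A assume "A \<in> {2*e, -(2*e)}"
    thus "A \<in> SA d" unfolding SA_def using assms two_ne by (auto simp: frob power_mult_distrib)
  qed
  moreover have "2*e \<noteq> -(2*e)"
  proof
    assume "2*e = -(2*e)"
    hence "4*e = 0" by (simp add: eq_neg_iff_add_eq_0)
    thus False using four_ne assms(2) by simp
  qed
  ultimately show ?thesis by simp
qed

lemma SA_C1:
  assumes "\<alpha>*d^2+2 \<in> C1 q"
  shows "SA d = {}"
proof (rule ccontr)
  assume "SA d \<noteq> {}"
  then obtain A where A: "A^q = A" "A \<noteq> 0" "A^2 = 4*(\<alpha>*d^2+2)" unfolding SA_def by auto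
  have "(2*A)^2 = 16*(\<alpha>*d^2+2)" using A(3) by (simp add: power_mult_distrib)
  hence "\<alpha>*d^2+2 = (2*A)^2" using sixteen by simp
  moreover have "(2*A)^q = 2*A" "2*A \<noteq> 0" using A two_ne by (simp_all add: frob)
  ultimately show False using assms unfolding C1_iff by blast
qed

lemma cubic_factor:
  assumes "\<alpha>*r^3 + r = d"
  shows "\<alpha>*b^3 + b - d = (b - r)*(\<alpha>*b^2+\<alpha>*r*b+\<alpha>*r^2+1)"
  using assms[symmetric] by (simp add: algebra_simps power2_eq_square power3_eq_cube)

lemma quad_id: "4*\<alpha>*(\<alpha>*b^2+\<alpha>*r*b+\<alpha>*r^2+1) = (2*\<alpha>*b+\<alpha>*r)^2 - 2*\<alpha>*(\<alpha>*r^2-2)"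
proof -
  have "4*\<alpha>*(\<alpha>*b^2+\<alpha>*r*b+\<alpha>*r^2+1) = (2*\<alpha>*b+\<alpha>*r)^2 - 2*\<alpha>*(\<alpha>*r^2-2) + 5*(\<alpha>^2*r^2)"
    by (simp add: algebra_simps power2_eq_square)
  thus ?thesis using c5 by simp
qed

lemma disc_id: "\<alpha>*(\<alpha>*r^3+r)^2+2 = (\<alpha>*r^2+2)^2*(\<alpha>*r^2-2)"
proof -
  have "\<alpha>*(\<alpha>*r^3+r)^2+2 = (\<alpha>*r^2+2)^2*(\<alpha>*r^2-2) + 5*(2 + \<alpha>*r^2)"
    by (simp add: algebra_simps power2_eq_square power3_eq_cube)
  thus ?thesis using c5 by simp
qed

lemma quad_root:
  assumes "r \<in> RR d" "b \<in> RR d" "b \<noteq> r"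
  shows "(2*\<alpha>*b+\<alpha>*r)^2 = 2*\<alpha>*(\<alpha>*r^2-2)"
proof -
  have r: "\<alpha>*r^3 + r = d" and b: "\<alpha>*b^3 + b = d" using assms unfolding RR_def by auto
  have "(b - r)*(\<alpha>*b^2+\<alpha>*r*b+\<alpha>*r^2+1) = 0" using cubic_factor[OF r, of b] b by simp
  hence "\<alpha>*b^2+\<alpha>*r*b+\<alpha>*r^2+1 = 0" using assms(3) by simp
  hence "4*\<alpha>*(\<alpha>*b^2+\<alpha>*r*b+\<alpha>*r^2+1) = 0" by simp
  thus ?thesis unfolding quad_id by simp
qed

end


context L begin

lemma RR_C0:
  assumes e: "e^q = e" "e \<noteq> 0" "e^2 = \<alpha>*d^2+2" and r: "r \<in> RR d"
  shows "RR d = {r}"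
proof -
  have rq: "r^q = r" and rd: "\<alpha>*r^3 + r = d" using r unfolding RR_def by auto
  obtain r2 :: 'a where r2: "r2^q = r2" "r2^2 = 2" using sqrt2 by blast
  have r2ne: "r2 \<noteq> 0" using r2 two_ne by auto
  define t where "t = \<alpha>*r^2"
  have et: "e^2 = (t+2)^2*(t-2)" unfolding t_def using e(3) disc_id[of r] rd by simp
  have m0: "t+2 \<noteq> 0" using et e(2) by auto
  have t0: "t-2 \<noteq> 0" using et e(2) by auto
  have "b = r" if b: "b \<in> RR d" for b
  proof (rule ccontr)
    assume "b \<noteq> r"
    hence u2: "(2*\<alpha>*b+\<alpha>*r)^2 = 2*\<alpha>*(t-2)" using quad_root[OF r b] unfolding t_def by simp
    have bq: "b^q = b" using b unfolding RR_def by auto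
    define z where "z = (2*\<alpha>*b+\<alpha>*r)*(t+2)/(r2*e)"
    have "z^2 = (2*\<alpha>*b+\<alpha>*r)^2*(t+2)^2/(r2^2*e^2)"
      unfolding z_def by (simp add: power_divide power_mult_distrib)
    also have "\<dots> = 2*\<alpha>*(t-2)*(t+2)^2/(2*((t+2)^2*(t-2)))" unfolding u2 r2(2) et ..
    also have "2*\<alpha>*(t-2)*(t+2)^2 = \<alpha> * (2*((t+2)^2*(t-2)))" by (simp add: algebra_simps)
    also have "\<alpha> * (2*((t+2)^2*(t-2))) / (2*((t+2)^2*(t-2))) = \<alpha>"
      using m0 t0 two_ne by (intro nonzero_mult_div_cancel_right) simp
    finally have "\<alpha> = z^2" by simp
    moreover have "z^q = z" unfolding z_def t_def using bq rq aF r2 e by (simp add: frob)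
    ultimately show False using a_nsq by blast
  qed
  thus ?thesis using r by blast
qed

lemma RR_C1:
  assumes c1: "\<alpha>*d^2+2 \<in> C1 q" and r: "r \<in> RR d"
  shows "card (RR d) = 3"
proof -
  have rq: "r^q = r" and rd: "\<alpha>*r^3 + r = d" using r unfolding RR_def by auto
  obtain r2 :: 'a where r2: "r2^q = r2" "r2^2 = 2" using sqrt2 by blast
  have r2ne: "r2 \<noteq> 0" using r2 two_ne by auto
  define t where "t = \<alpha>*r^2"
  have tq: "t^q = t" unfolding t_def using rq aF by (simp add: frob)
  have dt: "\<alpha>*d^2+2 = (t+2)^2*(t-2)" unfolding t_def using disc_id[of r] rd by simp
  have c1': "\<alpha>*d^2+2 \<noteq> 0" "\<not> (\<exists>y. \<alpha>*d^2+2 = y^2 \<and> y^q = y \<and> y \<noteq> 0)"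
    using c1 unfolding C1_iff by auto
  have m0: "t+2 \<noteq> 0" and t0: "t-2 \<noteq> 0" using dt c1'(1) by auto
  have nsq: "\<forall>y. y^q = y \<longrightarrow> t-2 \<noteq> y^2"
  proof (intro allI impI notI)
    fix y assume y: "y^q = y" "t-2 = y^2"
    have "\<alpha>*d^2+2 = ((t+2)*y)^2" using dt y(2) by (simp add: power_mult_distrib)
    moreover have "((t+2)*y)^q = (t+2)*y" using tq y(1) by (simp add: frob)
    moreover have "(t+2)*y \<noteq> 0" using c1'(1) calculation(1) by auto
    ultimately show False using c1'(2) by blast
  qed
  obtain w where w: "w^q = w" "\<alpha>*(t-2) = w^2"
    using nsq_prod[OF aF a_ne _ _ _ nsq] a_nsq tq t0 by (auto simp: frob)
  have w0: "w \<noteq> 0" using w(2) a_ne t0 by auto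
  define v where "v = r2*w"
  have v2: "v^2 = 2*\<alpha>*(t-2)" unfolding v_def using r2 w by (simp add: power_mult_distrib)
  have v0: "v \<noteq> 0" unfolding v_def using r2ne w0 by simp
  have vq: "v^q = v" unfolding v_def using r2 w by (simp add: frob)
  define b1 where "b1 = (v - \<alpha>*r)/(2*\<alpha>)"
  define b2 where "b2 = (-v - \<alpha>*r)/(2*\<alpha>)"
  have eb1: "2*\<alpha>*b1+\<alpha>*r = v" unfolding b1_def using a_ne two_ne by (simp add: field_simps)
  have eb2: "2*\<alpha>*b2+\<alpha>*r = -v" unfolding b2_def using a_ne two_ne by (simp add: field_simps)
  have quad0: "\<alpha>*b^2+\<alpha>*r*b+\<alpha>*r^2+1 = 0" if "(2*\<alpha>*b+\<alpha>*r)^2 = v^2" for b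
  proof -
    have "4*\<alpha>*(\<alpha>*b^2+\<alpha>*r*b+\<alpha>*r^2+1) = 0"
      unfolding quad_id using that v2 unfolding t_def by simp
    thus ?thesis using a_ne four_ne by simp
  qed
  have inR: "b \<in> RR d" if bq: "b^q = b" and "(2*\<alpha>*b+\<alpha>*r)^2 = v^2" for b
  proof -
    have "\<alpha>*b^3 + b - d = 0" unfolding cubic_factor[OF rd] using quad0[OF that(2)] by simp
    thus ?thesis unfolding RR_def using bq by simp
  qed
  have neqr: "b \<noteq> r" if "(2*\<alpha>*b+\<alpha>*r)^2 = v^2" for b
  proof
    assume "b = r"
    hence "\<alpha>*r^2+\<alpha>*r*r+\<alpha>*r^2+1 = 0" using quad0[OF that] by simp
    hence h: "3*t+1 = 0" unfolding t_def by (simp add: algebra_simps power2_eq_square)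
    have "t+2 = 2*(3*t+1) - 5*t" by (simp add: algebra_simps)
    hence "t+2 = 0" using h c5 by simp
    thus False using m0 by simp
  qed
  have b1q: "b1^q = b1" unfolding b1_def using vq aF rq by (simp add: frob)
  have b2q: "b2^q = b2" unfolding b2_def using vq aF rq by (simp add: frob)
  have s1: "(2*\<alpha>*b1+\<alpha>*r)^2 = v^2" using eb1 by simp
  have s2: "(2*\<alpha>*b2+\<alpha>*r)^2 = v^2" using eb2 by simp
  have "RR d = {r, b1, b2}"
  proof (intro Set.set_eqI iffI)
    fix b assume b: "b \<in> RR d"
    show "b \<in> {r, b1, b2}"
    proof (cases "b = r")
      case False
      have u2: "(2*\<alpha>*b+\<alpha>*r)^2 = v^2" using quad_root[OF r b False] v2 unfolding t_def by simp
      hence "(2*\<alpha>*b+\<alpha>*r - v)*(2*\<alpha>*b+\<alpha>*r + v) = 0" by (simp add: algebra_simps power2_eq_square)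
      hence "2*\<alpha>*b+\<alpha>*r = v \<or> 2*\<alpha>*b+\<alpha>*r = -v" by (simp add: eq_neg_iff_add_eq_0)
      hence "2*\<alpha>*b+\<alpha>*r = 2*\<alpha>*b1+\<alpha>*r \<or> 2*\<alpha>*b+\<alpha>*r = 2*\<alpha>*b2+\<alpha>*r" using eb1 eb2 by simp
      hence "b = b1 \<or> b = b2" using a_ne two_ne by simp
      thus ?thesis by simp
    qed simp
  next
    fix b assume "b \<in> {r, b1, b2}"
    thus "b \<in> RR d" using r inR[OF b1q s1] inR[OF b2q s2] by auto
  qed
  moreover have "b1 \<noteq> b2"
  proof
    assume "b1 = b2"
    hence "v = -v" using eb1 eb2 by simp
    hence "2*v = 0" by (simp add: eq_neg_iff_add_eq_0)
    thus False using v0 two_ne by simp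
  qed
  ultimately show ?thesis using neqr[OF s1] neqr[OF s2] by auto
qed

end


context L begin

lemma cardano:
  assumes d: "d^q = d" and e: "e^q = e" "e \<noteq> 0" "e^2 = \<alpha>*d^2+2"
  shows "\<exists>b. b \<in> RR d"
proof -
  define w where "w = 3*(d/\<alpha> + e*Z/\<alpha>^2)"
  define k where "k = 3/\<alpha>"
  have wq: "w^q = 3*(d/\<alpha> - e*Z/\<alpha>^2)" unfolding w_def using d e aF Zq by (simp add: frob)
  have kq: "k^q = k" unfolding k_def using aF by (simp add: frob)
  have k0: "k \<noteq> 0" unfolding k_def using three_ne a_ne by simp
  have "w * w^q = 9*((d/\<alpha>)^2 - (e*Z/\<alpha>^2)^2)" unfolding wq unfolding w_def
    by (simp add: algebra_simps power2_eq_square)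
  also have "(e*Z/\<alpha>^2)^2 = e^2 * Z^2 / (\<alpha>^2)^2" by (simp add: power_divide power_mult_distrib)
  also have "\<dots> = (\<alpha>*d^2+2)/\<alpha>^3" unfolding e(3) Z2 using a_ne
    by (simp add: field_simps power2_eq_square power3_eq_cube)
  also have "9*((d/\<alpha>)^2 - (\<alpha>*d^2+2)/\<alpha>^3) = k^3 + 5*(-9/\<alpha>^3)"
    unfolding k_def using a_ne by (simp add: field_simps power2_eq_square power3_eq_cube)
  finally have ww: "w * w^q = k^3" using c5 by simp
  have w0: "w \<noteq> 0" using ww k0 by auto
  have wq1: "w^(q+1) = k^3" using ww by (simp add: mult.commute)
  obtain s where s3: "s^3 = w" using cube_root[OF w0 wq1 kq k0] by blast
  define N where "N = s * s^q"
  have Nq: "N^q = N" unfolding N_def using conj_conj by (simp add: frob mult.commute)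
  have N3: "N^3 = k^3"
  proof -
    have "N^3 = s^3 * (s^3)^q" unfolding N_def by (simp add: frob power_mult_distrib)
    thus ?thesis using s3 ww by simp
  qed
  define om where "om = N/k"
  have om3: "om^3 = 1" unfolding om_def using N3 k0 by (simp add: power_divide)
  have omq: "om^q = om" unfolding om_def using Nq kq by (simp add: frob)
  have Nk: "N = k * om" unfolding om_def using k0 by simp
  define s' where "s' = s * om"
  have s'3: "s'^3 = w" unfolding s'_def using s3 om3 by (simp add: power_mult_distrib)
  have s'q: "s'^q = s^q * om" unfolding s'_def using omq by (simp add: frob)
  have s'N: "s' * s'^q = k"
  proof -
    have "s' * s'^q = N * om^2" unfolding s'q unfolding s'_def N_def by (simp add: algebra_simps power2_eq_square)
    also have "\<dots> = k * om^3" unfolding Nk by (simp add: algebra_simps power2_eq_square power3_eq_cube)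
    finally show ?thesis using om3 by simp
  qed
  define b where "b = s' + s'^q"
  have bq: "b^q = b" unfolding b_def using conj_conj by (simp add: frob add.commute)
  have "b^3 = s'^3 + (s'^3)^q + 3*(s'*s'^q)*b"
    unfolding b_def by (simp add: frob algebra_simps power2_eq_square power3_eq_cube)
  hence b3: "b^3 = w + w^q + 3*k*b" using s'3 s'N by simp
  have wsum: "w + w^q = 6*(d/\<alpha>)" unfolding wq unfolding w_def by (simp add: algebra_simps)
  have "\<alpha>*b^3 + b = \<alpha>*(6*(d/\<alpha>) + 3*(3/\<alpha>)*b) + b" unfolding b3 wsum k_def by simp
  also have "\<dots> = d + 5*(d + 2*b)" using a_ne by (simp add: field_simps)
  finally have "\<alpha>*b^3 + b = d" using c5 by simp
  thus ?thesis unfolding RR_def using bq by blast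
qed

lemma count:
  assumes d: "d^q = d" "d \<noteq> 0"
  shows "(\<alpha>*d^2+2 \<in> C0 q \<longrightarrow>
           card {(x,y). x^(q+2) - y^(q+2) = 3*d*Z \<and> (x+1)^(q+2) - (y+1)^(q+2) = 3*d*Z} = 3) \<and>
         (\<alpha>*d^2+2 \<in> C1 q \<longrightarrow>
           card {(x,y). x^(q+2) - y^(q+2) = 3*d*Z \<and> (x+1)^(q+2) - (y+1)^(q+2) = 3*d*Z} \<in> {0,3})"
proof -
  have cp: "card {(x,y). x^(q+2) - y^(q+2) = 3*d*Z \<and> (x+1)^(q+2) - (y+1)^(q+2) = 3*d*Z}
      = card (SA d) + card (RR d)" using card_pairs[OF d] card_T[OF d] by simp
  show ?thesis
  proof (intro conjI impI)
    assume "\<alpha>*d^2+2 \<in> C0 q"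
    then obtain e where e: "\<alpha>*d^2+2 = e^2" "e^q = e" "e \<noteq> 0" unfolding C0_iff by blast
    obtain r where r: "r \<in> RR d" using cardano[OF d(1) e(2,3) e(1)[symmetric]] by blast
    have "RR d = {r}" using RR_C0[OF e(2,3) e(1)[symmetric] r] .
    thus "card {(x,y). x^(q+2) - y^(q+2) = 3*d*Z \<and> (x+1)^(q+2) - (y+1)^(q+2) = 3*d*Z} = 3"
      using cp SA_C0[OF e(2,3) e(1)[symmetric]] by simp
  next
    assume c1: "\<alpha>*d^2+2 \<in> C1 q"
    have "card (RR d) = 0 \<or> card (RR d) = 3"
    proof (cases "RR d = {}")
      case False
      then obtain r where "r \<in> RR d" by blast
      thus ?thesis using RR_C1[OF c1] by simp
    qed simp
    thus "card {(x,y). x^(q+2) - y^(q+2) = 3*d*Z \<and> (x+1)^(q+2) - (y+1)^(q+2) = 3*d*Z} \<in> {0,3}"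
      using cp SA_C1[OF c1] by auto
  qed
qed

end


theorem lemma11:
  fixes m q :: nat and \<alpha> Z :: "'a::{field,finite}"
  assumes "q = 5 ^ m" and "even m"
    and "card (UNIV :: 'a set) = q ^ 2"
    and "\<alpha> \<in> C1 q"
    and "Z \<notin> subfield_q q" and "Z ^ 2 = \<alpha>"
  defines "f \<equiv> (\<lambda>x::'a. x ^ (q + 2))"
  defines "\<beta> \<equiv> (\<lambda>b::'a. beta_f f 1 (b / 4))"
  shows "\<forall>d \<in> subfield_q q - {0}.
           (d ^ 2 * \<alpha> + 2 \<in> C0 q \<longrightarrow> \<beta> (2 * d * Z) = 3) \<and>
           (d ^ 2 * \<alpha> + 2 \<in> C1 q \<longrightarrow> \<beta> (2 * d * Z) \<in> {0, 3})"
proof -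
  have fin: "finite (UNIV::'a set)" by simp
  have cpos: "CHAR('a) > 0" by (rule finite_imp_CHAR_pos[OF fin])
  have pc: "prime CHAR('a)" by (rule prime_CHAR_semidom[OF cpos])
  obtain k where k: "m = 2 * k" using assms(2) by (elim evenE)
  have q25k: "q = 25 ^ k" using assms(1) k by (simp add: power_mult)
  have card2: "card (UNIV::'a set) \<ge> 2"
  proof -
    have "card {0::'a, 1} \<le> card (UNIV :: 'a set)" by (rule card_mono) auto
    thus ?thesis by simp
  qed
  have k0: "k \<noteq> 0"
  proof
    assume "k = 0"
    hence "card (UNIV::'a set) = 1" using assms(3) q25k by simp
    thus False using card2 by simp
  qed
  have "CHAR('a) dvd card (UNIV::'a set)" by (rule CHAR_dvd_CARD)
  hence "CHAR('a) dvd 5 ^ (2*m)" using assms(1,3) by (simp add: power_mult[symmetric] mult.commute)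
  hence "CHAR('a) dvd 5" by (rule prime_dvd_power[OF pc])
  hence ch: "CHAR('a) = 5" using primes_dvd_imp_eq[OF pc] by simp
  have c5: "(5::'a) = 0" using of_nat_CHAR[where 'a='a] ch by simp
  have qc: "q = CHAR('a) ^ m" using assms(1) ch by simp
  have frob: "(x + y) ^ q = x ^ q + y ^ q" for x y :: 'a
    by (rule freshmans_dream'[OF pc qc])
  have "[(25::nat) ^ k = 1 ^ k] (mod 24)" by (rule cong_pow) (simp add: cong_def)
  hence "[(25::nat) ^ k = 1] (mod 24)" by simp
  hence "24 dvd (25::nat) ^ k - 1" by (rule cong_to_1_nat)
  hence q24: "24 dvd q - 1" using q25k by simp
  have "25 ^ 1 \<le> (25::nat) ^ k" using k0 by (intro power_increasing) auto
  hence q25: "q \<ge> 25" using q25k by simp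
  interpret L q \<alpha> Z
    by unfold_locales (use c5 assms(3) frob q24 q25 assms(4) assms(6) in auto)
  show ?thesis
  proof (intro ballI)
    fix d :: 'a assume "d \<in> subfield_q q - {0}"
    hence d: "d^q = d" "d \<noteq> 0" by (auto simp: subfield_q_def)
    have c: "2 * d * Z / 4 = 3 * d * Z"
    proof -
      have "(12::'a) = 2 + 2 * 5" by simp
      hence h12: "(12::'a) = 2" using c5 by simp
      have "2 * d * Z = 3 * d * Z * 4" by (simp add: algebra_simps h12)
      thus ?thesis using four_ne by simp
    qed
    have b: "\<beta> (2 * d * Z) = card {(x,y). x^(q+2) - y^(q+2) = 3*d*Z \<and> (x+1)^(q+2) - (y+1)^(q+2) = 3*d*Z}"
      unfolding \<beta>_def beta_f_def f_def c ..
    have sw: "d ^ 2 * \<alpha> + 2 = \<alpha> * d^2 + 2" by (simp add: mult.commute)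
    show "(d ^ 2 * \<alpha> + 2 \<in> C0 q \<longrightarrow> \<beta> (2 * d * Z) = 3) \<and>
           (d ^ 2 * \<alpha> + 2 \<in> C1 q \<longrightarrow> \<beta> (2 * d * Z) \<in> {0, 3})"
      unfolding b sw using count[OF d] .
  qed
qed

end
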